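(* Consider a maxout network $\mathcal N$ with $n_0$ inputs. Let $r\in\{0,\dots,n_0\}$ and let $J$ be an $r$-partial activation pattern. Then for every parameter value $\theta$, the activation region $\mathcal R(J,\theta)$ is a relatively open convex polyhedron in $\mathbb{R}^{n_0}$, and for almost every $\theta$ (with respect to Lebesgue measure) it is either empty or has codimension $r$.
   Context: A rank-$K$ maxout unit computes $y\mapsto\max_{k\in[K]}\{w_k\cdot y+b_k\}$. The network has hidden layers whose coordinates are rank-$K$ maxout units (followed by a linear output layer); hidden units are indexed by $z\in[N]$, and for unit $z$ in layer $l(z)$, $\zeta_{z,k}(x;\theta)=w_{z,k}\cdot x_{l(z)-1}+b_{z,k}$ is its $k$-th pre-activation feature as a function of the network input $x$ ($x_{l-1}$ the output of layer $l-1$, $x_0=x$). An activation pattern is a tuple $J=(J_z)_{z\in[N]}$ of nonempty sets $J_z\subseteq[K]$; it is $r$-partial if $\sum_z(|J_z|-1)=r$. Its activation region is $\mathcal R(J,\theta)=\{x\in\mathbb{R}^{n_0}:\arg\max_{k\in[K]}\zeta_{z,k}(x;\theta)=J_z\text{ for all }z\in[N]\}$. *)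

theory Defs
  imports "HOL-Analysis.Analysis" "HOL-Probability.Probability"
begin

text \<open>Maxout network with input space real^'n (so n0 = CARD('n)) and hidden layers
  of widths ns!0, ..., ns!(L-1), L = length ns (layers numbered from 0 here).\<close>

datatype 'n param =
    W0 nat nat 'n          \<comment> \<open>W0 i k j: weight of input coordinate j in piece k of unit i of layer 0\<close>
  | W nat nat nat nat      \<comment> \<open>W l i k j (0 < l): weight of unit j of layer l-1 in piece k of unit i of layer l\<close>
  | Bp nat nat nat         \<comment> \<open>Bp l i k: bias of piece k of unit i of layer l\<close>

definition param_set :: "nat list \<Rightarrow> nat \<Rightarrow> 'n::finite param set" where
  "param_set ns K =
     {W0 i k j | i k j. 0 < length ns \<and> i < ns!0 \<and> k < K}
   \<union> {W l i k j | l i k j. 0 < l \<and> l < length ns \<and> i < ns!l \<and> k < K \<and> j < ns!(l-1)}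
   \<union> {Bp l i k | l i k. l < length ns \<and> i < ns!l \<and> k < K}"

fun feat :: "('n::finite param \<Rightarrow> real) \<Rightarrow> nat list \<Rightarrow> nat \<Rightarrow> nat \<Rightarrow> real^'n \<Rightarrow> nat \<Rightarrow> nat \<Rightarrow> real" where
  "feat \<theta> ns K 0 x i k = (\<Sum>j\<in>UNIV. \<theta> (W0 i k j) * x $ j) + \<theta> (Bp 0 i k)"
| "feat \<theta> ns K (Suc l) x i k =
     (\<Sum>j<ns!l. \<theta> (W (Suc l) i k j) * Max ((\<lambda>k'. feat \<theta> ns K l x j k') ` {..<K}))
     + \<theta> (Bp (Suc l) i k)"

definition unit_out :: "('n::finite param \<Rightarrow> real) \<Rightarrow> nat list \<Rightarrow> nat \<Rightarrow> nat \<Rightarrow> real^'n \<Rightarrow> nat \<Rightarrow> real" where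
  "unit_out \<theta> ns K l x i = Max ((\<lambda>k. feat \<theta> ns K l x i k) ` {..<K})"

definition argmax_set :: "('n::finite param \<Rightarrow> real) \<Rightarrow> nat list \<Rightarrow> nat \<Rightarrow> nat \<Rightarrow> real^'n \<Rightarrow> nat \<Rightarrow> nat set" where
  "argmax_set \<theta> ns K l x i =
     {k. k < K \<and> (\<forall>k'<K. feat \<theta> ns K l x i k' \<le> feat \<theta> ns K l x i k)}"

definition activation_pattern :: "nat list \<Rightarrow> nat \<Rightarrow> (nat \<Rightarrow> nat \<Rightarrow> nat set) \<Rightarrow> bool" where
  "activation_pattern ns K J \<longleftrightarrow>
     (\<forall>l<length ns. \<forall>i<ns!l. J l i \<noteq> {} \<and> J l i \<subseteq> {..<K})"

definition partial_degree :: "nat list \<Rightarrow> (nat \<Rightarrow> nat \<Rightarrow> nat set) \<Rightarrow> nat" where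
  "partial_degree ns J = (\<Sum>(l,i)\<in>{(l,i). l < length ns \<and> i < ns!l}. card (J l i) - 1)"

definition activation_region ::
  "nat list \<Rightarrow> nat \<Rightarrow> (nat \<Rightarrow> nat \<Rightarrow> nat set) \<Rightarrow> ('n::finite param \<Rightarrow> real) \<Rightarrow> (real^'n) set" where
  "activation_region ns K J \<theta> =
     {x. \<forall>l<length ns. \<forall>i<ns!l. argmax_set \<theta> ns K l x i = J l i}"

end

theory Submission
  imports Defs
begin


lemma affine_sol:
  fixes V :: "'q \<Rightarrow> 'a::euclidean_space"
  shows "affine {x. \<forall>q\<in>Q. V q \<bullet> x + D q = 0}"
  unfolding affine_def
proof (intro allI impI ballI, clarify)
  fix x y :: 'a and u v :: real and q
  assume "\<forall>q\<in>Q. V q \<bullet> x + D q = 0" "\<forall>q\<in>Q. V q \<bullet> y + D q = 0" "u + v = 1" "q \<in> Q"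
  then have "V q \<bullet> x = - D q" "V q \<bullet> y = - D q" by (auto simp: add_eq_0_iff)
  then have "V q \<bullet> (u *\<^sub>R x + v *\<^sub>R y) = (u + v) * (- D q)"
    by (simp add: inner_add_right distrib_right)
  with \<open>u+v=1\<close> show "V q \<bullet> (u *\<^sub>R x + v *\<^sub>R y) + D q = 0" by simp
qed

lemma open_strict:
  fixes V :: "'q \<Rightarrow> 'a::euclidean_space"
  assumes "finite Q2"
  shows "open {x. \<forall>q\<in>Q2. V q \<bullet> x + D q < 0}"
proof -
  have "{x. \<forall>q\<in>Q2. V q \<bullet> x + D q < 0} = (\<Inter>q\<in>Q2. {x. V q \<bullet> x < - D q})"
  proof -
    have e: "\<And>x q. (V q \<bullet> x + D q < 0) \<longleftrightarrow> (V q \<bullet> x < - D q)" by linarith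
    show ?thesis by (simp only: e) auto
  qed
  also have "open \<dots>" using assms by (intro open_INT) (auto intro: open_halfspace_lt)
  finally show ?thesis .
qed

lemma region_generic:
  fixes V :: "'q \<Rightarrow> 'a::euclidean_space" and D :: "'q \<Rightarrow> real"
  assumes fQ: "finite Q" and fQ2: "finite Q2"
    and R: "R = {x. (\<forall>q\<in>Q. V q \<bullet> x + D q = 0) \<and> (\<forall>q\<in>Q2. V q \<bullet> x + D q < 0)}"
  shows "convex R \<and> rel_interior R = R \<and> (\<exists>P. polyhedron P \<and> R = rel_interior P)"
proof -
  define S where "S = {x. \<forall>q\<in>Q. V q \<bullet> x + D q = 0}"
  define U where "U = {x. \<forall>q\<in>Q2. V q \<bullet> x + D q < 0}"
  have RSU: "R = S \<inter> U" by (auto simp: R S_def U_def)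
  have affS: "affine S" unfolding S_def by (rule affine_sol)
  have opU: "open U" unfolding U_def using fQ2 by (rule open_strict)
  have cvU: "convex U" unfolding U_def convex_def
  proof (intro allI impI ballI, clarify)
    fix x y :: 'a and u v :: real and q
    assume a: "\<forall>q\<in>Q2. V q \<bullet> x + D q < 0" "\<forall>q\<in>Q2. V q \<bullet> y + D q < 0" "u + v = 1" "0 \<le> u" "0 \<le> v" "q \<in> Q2"
    have "V q \<bullet> (u *\<^sub>R x + v *\<^sub>R y) + D q = u * (V q \<bullet> x + D q) + v * (V q \<bullet> y + D q)"
      using a(3) by (simp add: inner_add_right algebra_simps) (metis add.commute distrib_right mult_1 a(3))
    also have "\<dots> < 0"
    proof (cases "u = 0")
      case True
      then have "v = 1" using a(3) by simp
      moreover have "V q \<bullet> y + D q < 0" using a(2,6) by blast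
      ultimately show ?thesis using True by simp
    next
      case False then have "u > 0" using a by auto
      then have "u * (V q \<bullet> x + D q) < 0" using a by (simp add: mult_pos_neg)
      moreover have "v * (V q \<bullet> y + D q) \<le> 0"
      proof -
        have h: "V q \<bullet> y + D q < 0" using a by auto
        show ?thesis using a(5) h by (intro mult_nonneg_nonpos) auto
      qed
      ultimately show ?thesis by linarith
    qed
    finally show "V q \<bullet> (u *\<^sub>R x + v *\<^sub>R y) + D q < 0" .
  qed
  have cvR: "convex R" unfolding RSU using affine_imp_convex[OF affS] cvU by (rule convex_Int)
  have riR: "rel_interior R = R"
  proof
    show "rel_interior R \<subseteq> R" by (rule rel_interior_subset)
    show "R \<subseteq> rel_interior R"
    proof
      fix x assume x: "x \<in> R"
      have "affine hull R \<subseteq> S" using affS RSU by (intro hull_minimal) auto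
      then have "U \<inter> affine hull R \<subseteq> R" using RSU by auto
      moreover have "x \<in> U" using x RSU by auto
      ultimately show "x \<in> rel_interior R" unfolding rel_interior using x opU by blast
    qed
  qed
  have "\<exists>P. polyhedron P \<and> R = rel_interior P"
  proof (cases "R = {}")
    case True then show ?thesis by (intro exI[of _ "{}"]) auto
  next
    case False
    then obtain x0 where x0: "x0 \<in> R" by auto
    define Pc where "Pc = {x. (\<forall>q\<in>Q. V q \<bullet> x + D q = 0) \<and> (\<forall>q\<in>Q2. V q \<bullet> x + D q \<le> 0)}"
    have Pc_eq: "Pc = (\<Inter>q\<in>Q. {x. V q \<bullet> x = - D q}) \<inter> (\<Inter>q\<in>Q2. {x. V q \<bullet> x \<le> - D q})"
    proof -
      have e1: "\<And>x q. (V q \<bullet> x + D q = 0) \<longleftrightarrow> (V q \<bullet> x = - D q)" by linarith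
      have e2: "\<And>x q. (V q \<bullet> x + D q \<le> 0) \<longleftrightarrow> (V q \<bullet> x \<le> - D q)" by linarith
      show ?thesis unfolding Pc_def by (simp only: e1 e2) auto
    qed
    have polyPc: "polyhedron Pc" unfolding Pc_eq using fQ fQ2
      by (intro polyhedron_Int polyhedron_Inter) (auto intro: polyhedron_hyperplane polyhedron_halfspace_le)
    have clPc: "closed Pc" unfolding Pc_eq
      by (intro closed_Int closed_INT) (auto intro: closed_hyperplane closed_halfspace_le)
    have "closure R = Pc"
    proof
      show "closure R \<subseteq> Pc" using clPc by (intro closure_minimal) (auto simp: R Pc_def less_imp_le)
      show "Pc \<subseteq> closure R"
      proof
        fix y assume y: "y \<in> Pc"
        define z where "z = (\<lambda>n::nat. y + (1 / real (Suc n)) *\<^sub>R (x0 - y))"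
        have zR: "z n \<in> R" for n
        proof -
          define t where "t = 1 / real (Suc n)"
          have t: "0 < t" "t \<le> 1" by (auto simp: t_def)
          have eq: "V q \<bullet> z n + D q = (1 - t) * (V q \<bullet> y + D q) + t * (V q \<bullet> x0 + D q)" for q
            by (simp add: z_def t_def inner_add_right inner_diff_right algebra_simps)
          show ?thesis unfolding R
          proof (intro CollectI conjI ballI)
            fix q assume q: "q \<in> Q"
            have "V q \<bullet> y + D q = 0" using y q unfolding Pc_def by blast
            moreover have "V q \<bullet> x0 + D q = 0" using x0 q unfolding R by blast
            ultimately show "V q \<bullet> z n + D q = 0" by (simp add: eq)
          next
            fix q assume q: "q \<in> Q2"
            have "(1 - t) * (V q \<bullet> y + D q) \<le> 0" using y q t by (intro mult_nonneg_nonpos) (auto simp: Pc_def)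
            moreover have "t * (V q \<bullet> x0 + D q) < 0" using x0 q t by (intro mult_pos_neg) (auto simp: R)
            ultimately show "V q \<bullet> z n + D q < 0" by (simp add: eq)
          qed
        qed
        have l0: "(\<lambda>n. 1 / real (Suc n)) \<longlonglongrightarrow> 0" by (rule LIMSEQ_Suc[OF lim_inverse_n'])
        have "z \<longlonglongrightarrow> y + 0 *\<^sub>R (x0 - y)" unfolding z_def
          by (rule tendsto_add[OF tendsto_const tendsto_scaleR[OF l0 tendsto_const]])
        then have "z \<longlonglongrightarrow> y" by simp
        then show "y \<in> closure R" using zR by (meson closure_sequential)
      qed
    qed
    then show ?thesis using polyPc convex_rel_interior_closure[OF cvR] riR
      by (intro exI[of _ "closure R"]) auto
  qed
  with cvR riR show ?thesis by blast
qed

lemma affdim_generic: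
  fixes V :: "'q \<Rightarrow> 'a::euclidean_space" and D :: "'q \<Rightarrow> real"
  assumes fQ2: "finite Q2"
    and R: "R = {x. (\<forall>q\<in>Q. V q \<bullet> x + D q = 0) \<and> (\<forall>q\<in>Q2. V q \<bullet> x + D q < 0)}"
    and ne: "R \<noteq> {}"
  shows "aff_dim R = int DIM('a) - int (dim (V ` Q))"
proof -
  define S where "S = {x. \<forall>q\<in>Q. V q \<bullet> x + D q = 0}"
  define U where "U = {x. \<forall>q\<in>Q2. V q \<bullet> x + D q < 0}"
  have RSU: "R = U \<inter> S" by (auto simp: R S_def U_def)
  have affS: "affine S" unfolding S_def by (rule affine_sol)
  have opU: "open U" unfolding U_def using fQ2 by (rule open_strict)
  have "openin (top_of_set S) R" unfolding RSU using opU by (auto simp: openin_open)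
  then have "aff_dim R = aff_dim S" using affS ne by (rule aff_dim_openin)
  obtain x0 where x0: "x0 \<in> R" using ne by auto
  then have x0S: "x0 \<in> S" using RSU by auto
  define Z where "Z = {y. \<forall>q\<in>Q. V q \<bullet> y = 0}"
  have "(+) (- x0) ` S = Z"
  proof
    show "(+) (- x0) ` S \<subseteq> Z"
    proof clarify
      fix y assume yS: "y \<in> S"
      show "- x0 + y \<in> Z" unfolding Z_def
      proof (intro CollectI ballI)
        fix q assume q: "q \<in> Q"
        have "V q \<bullet> y + D q = 0" using yS q unfolding S_def by blast
        moreover have "V q \<bullet> x0 + D q = 0" using x0S q unfolding S_def by blast
        ultimately show "V q \<bullet> (- x0 + y) = 0" by (simp add: inner_add_right inner_diff_right)
      qed
    qed
    show "Z \<subseteq> (+) (- x0) ` S"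
    proof
      fix z assume "z \<in> Z"
      then have "z + x0 \<in> S" using x0S unfolding S_def Z_def by (simp add: inner_add_right)
      then show "z \<in> (+) (- x0) ` S" by (intro image_eqI[of _ _ "z + x0"]) auto
    qed
  qed
  have xh: "x0 \<in> affine hull S" using x0S by (rule hull_inc)
  have "aff_dim S = int (dim Z)" unfolding \<open>(+) (- x0) ` S = Z\<close>[symmetric] by (rule aff_dim_eq_dim[OF xh])
  have Zeq: "{y \<in> UNIV. \<forall>x\<in>span (V ` Q). orthogonal x y} = Z"
  proof
    show "{y \<in> UNIV. \<forall>x\<in>span (V ` Q). orthogonal x y} \<subseteq> Z"
      by (auto simp: Z_def orthogonal_def span_base)
    show "Z \<subseteq> {y \<in> UNIV. \<forall>x\<in>span (V ` Q). orthogonal x y}"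
    proof (intro subsetI CollectI conjI UNIV_I ballI)
      fix y x assume yZ: "y \<in> Z" and xs: "x \<in> span (V ` Q)"
      have "orthogonal y x"
      proof (rule orthogonal_to_span[OF xs])
        fix v assume "v \<in> V ` Q"
        then show "orthogonal y v" using yZ unfolding Z_def orthogonal_def by (auto simp: inner_commute)
      qed
      then show "orthogonal x y" by (simp add: orthogonal_commute)
    qed
  qed
  have "dim Z + dim (span (V ` Q)) = dim (UNIV :: 'a set)"
    using dim_subspace_orthogonal_to_vectors[of "span (V ` Q)" UNIV] Zeq by auto
  then have "dim Z + dim (V ` Q) = DIM('a)" by simp
  then show ?thesis using \<open>aff_dim R = aff_dim S\<close> \<open>aff_dim S = int (dim Z)\<close> by linarith
qed



definition coef :: "'a::real_inner \<Rightarrow> 'a \<Rightarrow> real" where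
  "coef u v = (v \<bullet> u) / (u \<bullet> u)"

definition gstep :: "('a::real_inner \<times> real) list \<Rightarrow> 'a \<times> real \<Rightarrow> 'a \<times> real" where
  "gstep acc p = (fst p - (\<Sum>j<length acc. coef (fst (acc!j)) (fst p) *\<^sub>R fst (acc!j)),
                  snd p - (\<Sum>j<length acc. coef (fst (acc!j)) (fst p) * snd (acc!j)))"

fun gsr :: "('a::real_inner \<times> real) list \<Rightarrow> ('a \<times> real) list" where
  "gsr [] = []"
| "gsr (p # ps) = gstep (gsr ps) p # gsr ps"

lemma gsr_length[simp]: "length (gsr ps) = length ps"
  by (induct ps) auto

lemma gsr_nth: "j < length ps \<Longrightarrow> gsr ps ! j = gstep (gsr (drop (Suc j) ps)) (ps ! j)"
  by (induct ps arbitrary: j) (auto simp: nth_Cons split: nat.split)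

lemma gsr_consistent:
  assumes "\<forall>p\<in>set ps. fst p \<bullet> x + snd p = 0"
  shows "\<forall>j<length ps. fst (gsr ps ! j) \<bullet> x + snd (gsr ps ! j) = 0"
  using assms
proof (induct ps)
  case Nil then show ?case by simp
next
  case (Cons p ps)
  define acc where "acc = gsr ps"
  have IH: "\<forall>j<length acc. fst (acc ! j) \<bullet> x + snd (acc ! j) = 0" using Cons by (simp add: acc_def)
  have h0: "fst (gstep acc p) \<bullet> x + snd (gstep acc p) = 0"
  proof -
    let ?c = "\<lambda>j. coef (fst (acc!j)) (fst p)"
    have "fst (gstep acc p) \<bullet> x + snd (gstep acc p)
        = (fst p \<bullet> x + snd p) - (\<Sum>j<length acc. ?c j * (fst (acc!j) \<bullet> x + snd (acc!j)))"
      by (simp add: gstep_def inner_diff_left inner_sum_left sum.distrib algebra_simps)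
    also have "\<dots> = 0" using Cons.prems IH by simp
    finally show ?thesis .
  qed
  show ?case
  proof (intro allI impI)
    fix j assume j: "j < length (p # ps)"
    show "fst (gsr (p # ps) ! j) \<bullet> x + snd (gsr (p # ps) ! j) = 0"
    proof (cases j)
      case 0 then show ?thesis using h0 by (simp add: acc_def)
    next
      case (Suc m) then show ?thesis using Cons j by simp
    qed
  qed
qed

lemma gstep_orth:
  assumes orth: "\<forall>i<length acc. \<forall>j<length acc. i \<noteq> j \<longrightarrow> fst (acc ! i) \<bullet> fst (acc ! j) = 0"
    and m: "m < length acc"
  shows "fst (gstep acc p) \<bullet> fst (acc ! m) = 0"
proof -
  let ?u = "\<lambda>j. fst (acc ! j)"
  let ?c = "\<lambda>j. coef (?u j) (fst p)"
  have "fst (gstep acc p) \<bullet> ?u m = fst p \<bullet> ?u m - (\<Sum>j<length acc. ?c j * (?u j \<bullet> ?u m))"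
    by (simp add: gstep_def inner_diff_left inner_sum_left)
  also have "(\<Sum>j<length acc. ?c j * (?u j \<bullet> ?u m)) = (\<Sum>j<length acc. if j = m then ?c m * (?u m \<bullet> ?u m) else 0)"
    by (rule sum.cong) (use orth m in auto)
  also have "\<dots> = ?c m * (?u m \<bullet> ?u m)" using m by simp
  also have "?c m * (?u m \<bullet> ?u m) = fst p \<bullet> ?u m"
    by (cases "?u m = 0") (auto simp: coef_def)
  finally show ?thesis by simp
qed

lemma gsr_orth:
  "\<forall>i<length ps. \<forall>j<length ps. i \<noteq> j \<longrightarrow> fst (gsr ps ! i) \<bullet> fst (gsr ps ! j) = 0"
proof (induct ps)
  case Nil then show ?case by simp
next
  case (Cons p ps)
  have o: "fst (gstep (gsr ps) p) \<bullet> fst (gsr ps ! m) = 0" if "m < length ps" for m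
    using gstep_orth[of "gsr ps" m p] Cons that by simp
  show ?case
  proof (intro allI impI)
    fix i j assume ij: "i < length (p # ps)" "j < length (p # ps)" "i \<noteq> j"
    show "fst (gsr (p # ps) ! i) \<bullet> fst (gsr (p # ps) ! j) = 0"
    proof (cases i)
      case 0
      then obtain m where "j = Suc m" using ij by (cases j) auto
      then show ?thesis using 0 o[of m] ij by simp
    next
      case (Suc i')
      show ?thesis
      proof (cases j)
        case 0 then show ?thesis using Suc o[of i'] ij by (simp add: inner_commute)
      next
        case (Suc j') then show ?thesis using \<open>i = Suc i'\<close> Cons ij by simp
      qed
    qed
  qed
qed

lemma gsr_span: "\<forall>j<length ps. fst (gsr ps ! j) \<in> span (fst ` set ps)"
proof (induct ps)
  case Nil then show ?case by simp
next
  case (Cons p ps)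
  have sub: "span (fst ` set ps) \<subseteq> span (fst ` set (p # ps))" by (intro span_mono) auto
  have IH: "fst (gsr ps ! j) \<in> span (fst ` set (p # ps))" if "j < length ps" for j
    using Cons that sub by blast
  have h0: "fst (gstep (gsr ps) p) \<in> span (fst ` set (p # ps))"
    unfolding gstep_def fst_conv
    by (intro span_diff span_sum span_scale IH span_base) auto
  show ?case
  proof (intro allI impI)
    fix j assume j: "j < length (p # ps)"
    show "fst (gsr (p # ps) ! j) \<in> span (fst ` set (p # ps))"
      using j h0 IH by (cases j) auto
  qed
qed

lemma gsr_dim:
  fixes ps :: "('a::euclidean_space \<times> real) list"
  assumes nz: "\<forall>j<length ps. fst (gsr ps ! j) \<noteq> 0"
  shows "length ps \<le> dim (fst ` set ps)"
proof -
  define U where "U = (\<lambda>j. fst (gsr ps ! j)) ` {..<length ps}"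
  have orth: "\<forall>i<length ps. \<forall>j<length ps. i \<noteq> j \<longrightarrow> fst (gsr ps ! i) \<bullet> fst (gsr ps ! j) = 0"
    by (rule gsr_orth)
  have inj: "inj_on (\<lambda>j. fst (gsr ps ! j)) {..<length ps}"
  proof (rule inj_onI)
    fix i j assume "i \<in> {..<length ps}" "j \<in> {..<length ps}" "fst (gsr ps ! i) = fst (gsr ps ! j)"
    then show "i = j" using orth nz by (metis inner_eq_zero_iff lessThan_iff)
  qed
  have cardU: "card U = length ps" unfolding U_def using card_image[OF inj] by simp
  have "pairwise orthogonal U" unfolding U_def pairwise_def orthogonal_def using orth by auto
  moreover have "0 \<notin> U" unfolding U_def using nz by auto
  ultimately have ind: "independent U" by (rule pairwise_orthogonal_independent)
  have "U \<subseteq> span (fst ` set ps)" unfolding U_def using gsr_span[of ps] by auto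
  then have "card U \<le> dim (span (fst ` set ps))" using ind by (rule independent_card_le_dim)
  then show ?thesis using cardU by simp
qed

lemma gsr_measurable:
  fixes F :: "'b \<Rightarrow> 'q \<Rightarrow> ('a::euclidean_space \<times> real)"
  assumes m1: "\<And>q. (\<lambda>\<theta>. fst (F \<theta> q)) \<in> borel_measurable M"
    and m2: "\<And>q. (\<lambda>\<theta>. snd (F \<theta> q)) \<in> borel_measurable M"
  shows "\<forall>j<length qs. (\<lambda>\<theta>. fst (gsr (map (F \<theta>) qs) ! j)) \<in> borel_measurable M
                     \<and> (\<lambda>\<theta>. snd (gsr (map (F \<theta>) qs) ! j)) \<in> borel_measurable M"
proof (induct qs)
  case Nil then show ?case by simp
next
  case (Cons q qs)
  have a: "(\<lambda>\<theta>. fst (gsr (map (F \<theta>) qs) ! k)) \<in> borel_measurable M"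
       "(\<lambda>\<theta>. snd (gsr (map (F \<theta>) qs) ! k)) \<in> borel_measurable M" if "k < length qs" for k
    using Cons that by auto
  have h1: "(\<lambda>\<theta>. fst (gstep (gsr (map (F \<theta>) qs)) (F \<theta> q))) \<in> borel_measurable M"
    unfolding gstep_def fst_conv coef_def gsr_length length_map
    by (intro borel_measurable_diff borel_measurable_sum borel_measurable_scaleR borel_measurable_divide
        borel_measurable_inner m1 a) auto
  have h2: "(\<lambda>\<theta>. snd (gstep (gsr (map (F \<theta>) qs)) (F \<theta> q))) \<in> borel_measurable M"
    unfolding gstep_def snd_conv fst_conv coef_def gsr_length length_map
    by (intro borel_measurable_diff borel_measurable_sum borel_measurable_times borel_measurable_divide
        borel_measurable_inner m1 m2 a) auto
  show ?case
  proof (intro allI impI)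
    fix j assume j: "j < length (q # qs)"
    show "(\<lambda>\<theta>. fst (gsr (map (F \<theta>) (q # qs)) ! j)) \<in> borel_measurable M
        \<and> (\<lambda>\<theta>. snd (gsr (map (F \<theta>) (q # qs)) ! j)) \<in> borel_measurable M"
      using j h1 h2 a by (cases j) auto
  qed
qed

lemma null_section:
  fixes I :: "'i set" and p :: 'i and N :: "('i \<Rightarrow> real) set"
  assumes fin: "finite I" and p: "p \<in> I" and N: "N \<in> sets (PiM I (\<lambda>_. lborel))"
    and sec: "\<And>x. x \<in> space (PiM (I - {p}) (\<lambda>_. lborel)) \<Longrightarrow> \<exists>y0. \<forall>y. x(p := y) \<in> N \<longrightarrow> y = y0"
  shows "N \<in> null_sets (PiM I (\<lambda>_. lborel))"
proof -
  interpret product_sigma_finite "\<lambda>_::'i. lborel :: real measure"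
    by (simp add: product_sigma_finite_def sigma_finite_lborel)
  have Ieq: "I = insert p (I - {p})" using p by auto
  have "emeasure (PiM I (\<lambda>_. lborel)) N = (\<integral>\<^sup>+ \<theta>. indicator N \<theta> \<partial>PiM I (\<lambda>_. lborel))"
    using N by simp
  also have "\<dots> = (\<integral>\<^sup>+ x. (\<integral>\<^sup>+ y. indicator N (x(p := y)) \<partial>lborel) \<partial>PiM (I - {p}) (\<lambda>_. lborel))"
  proof -
    have m: "indicator N \<in> borel_measurable (PiM (insert p (I - {p})) (\<lambda>_. lborel))"
      using N Ieq by simp
    have "integral\<^sup>N (PiM (insert p (I - {p})) (\<lambda>_. lborel)) (indicator N)
       = (\<integral>\<^sup>+ x. (\<integral>\<^sup>+ y. indicator N (x(p := y)) \<partial>lborel) \<partial>PiM (I - {p}) (\<lambda>_. lborel))"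
      by (rule product_nn_integral_insert) (use fin m in auto)
    then show ?thesis using Ieq by simp
  qed
  also have "\<dots> = (\<integral>\<^sup>+ x. 0 \<partial>PiM (I - {p}) (\<lambda>_. lborel :: real measure))"
  proof (intro nn_integral_cong)
    fix x :: "'i \<Rightarrow> real" assume "x \<in> space (PiM (I - {p}) (\<lambda>_. lborel :: real measure))"
    then obtain y0 where y0: "\<forall>y. x(p := y) \<in> N \<longrightarrow> y = y0" using sec by blast
    have "(\<integral>\<^sup>+ y. indicator N (x(p := y)) \<partial>lborel) \<le> (\<integral>\<^sup>+ y. indicator {y0} y \<partial>lborel)"
      by (rule nn_integral_mono) (use y0 in \<open>auto simp: indicator_def\<close>)
    also have "\<dots> = 0" by simp
    finally show "(\<integral>\<^sup>+ y. indicator N (x(p := y)) \<partial>lborel) = 0" by simp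
  qed
  also have "\<dots> = 0" by simp
  finally show ?thesis using N by (intro null_setsI) auto
qed



definition sel :: "(nat \<Rightarrow> nat \<Rightarrow> nat set) \<Rightarrow> nat \<Rightarrow> nat \<Rightarrow> nat" where
  "sel J l i = Min (J l i)"

fun ga :: "('n::finite param \<Rightarrow> real) \<Rightarrow> nat list \<Rightarrow> (nat \<Rightarrow> nat \<Rightarrow> nat set) \<Rightarrow> nat \<Rightarrow> nat \<Rightarrow> nat \<Rightarrow> real^'n" where
  "ga \<theta> ns J 0 i k = (\<chi> j. \<theta> (W0 i k j))"
| "ga \<theta> ns J (Suc l) i k = (\<Sum>j<ns!l. \<theta> (W (Suc l) i k j) *\<^sub>R ga \<theta> ns J l j (sel J l j))"

fun gc :: "('n::finite param \<Rightarrow> real) \<Rightarrow> nat list \<Rightarrow> (nat \<Rightarrow> nat \<Rightarrow> nat set) \<Rightarrow> nat \<Rightarrow> nat \<Rightarrow> nat \<Rightarrow> real" where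
  "gc \<theta> ns J 0 i k = \<theta> (Bp 0 i k)"
| "gc \<theta> ns J (Suc l) i k = (\<Sum>j<ns!l. \<theta> (W (Suc l) i k j) * gc \<theta> ns J l j (sel J l j)) + \<theta> (Bp (Suc l) i k)"

definition GG :: "('n::finite param \<Rightarrow> real) \<Rightarrow> nat list \<Rightarrow> (nat \<Rightarrow> nat \<Rightarrow> nat set) \<Rightarrow> nat \<Rightarrow> real^'n \<Rightarrow> nat \<Rightarrow> nat \<Rightarrow> real" where
  "GG \<theta> ns J l x i k = ga \<theta> ns J l i k \<bullet> x + gc \<theta> ns J l i k"

definition argG :: "('n::finite param \<Rightarrow> real) \<Rightarrow> nat list \<Rightarrow> nat \<Rightarrow> (nat \<Rightarrow> nat \<Rightarrow> nat set) \<Rightarrow> nat \<Rightarrow> real^'n \<Rightarrow> nat \<Rightarrow> nat set" where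
  "argG \<theta> ns K J l x i = {k. k < K \<and> (\<forall>k'<K. GG \<theta> ns J l x i k' \<le> GG \<theta> ns J l x i k)}"

lemma sel_in:
  assumes "activation_pattern ns K J" "l < length ns" "i < ns!l"
  shows "sel J l i \<in> J l i" "sel J l i < K"
proof -
  have "J l i \<noteq> {}" "J l i \<subseteq> {..<K}" using assms by (auto simp: activation_pattern_def)
  moreover then have "finite (J l i)" using finite_subset by blast
  ultimately show "sel J l i \<in> J l i" unfolding sel_def by (intro Min_in) auto
  then show "sel J l i < K" using \<open>J l i \<subseteq> {..<K}\<close> by auto
qed

lemma feat_GG:
  assumes ap: "activation_pattern ns K J"
  shows "l < length ns \<Longrightarrow> (\<forall>l'<l. \<forall>i<ns!l'. argmax_set \<theta> ns K l' x i = J l' i)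
     \<Longrightarrow> feat \<theta> ns K l x i k = GG \<theta> ns J l x i k"
proof (induct l arbitrary: i k)
  case 0
  then show ?case by (simp add: GG_def inner_vec_def mult.commute)
next
  case (Suc l)
  have mx: "Max ((\<lambda>k'. feat \<theta> ns K l x j k') ` {..<K}) = GG \<theta> ns J l x j (sel J l j)" if j: "j < ns!l" for j
  proof -
    have l: "l < length ns" using Suc by simp
    have am: "argmax_set \<theta> ns K l x j = J l j" using Suc.prems j by auto
    have s: "sel J l j \<in> argmax_set \<theta> ns K l x j" using sel_in[OF ap l j] am by simp
    have "Max ((\<lambda>k'. feat \<theta> ns K l x j k') ` {..<K}) = feat \<theta> ns K l x j (sel J l j)"
      using s by (intro Max_eqI) (auto simp: argmax_set_def)
    also have "\<dots> = GG \<theta> ns J l x j (sel J l j)" using Suc l by auto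
    finally show ?thesis .
  qed
  have "feat \<theta> ns K (Suc l) x i k = (\<Sum>j<ns!l. \<theta> (W (Suc l) i k j) * GG \<theta> ns J l x j (sel J l j)) + \<theta> (Bp (Suc l) i k)"
    using mx by simp
  also have "\<dots> = GG \<theta> ns J (Suc l) x i k"
    by (simp add: GG_def inner_sum_left sum.distrib algebra_simps)
  finally show ?case .
qed

lemma region_argG:
  assumes ap: "activation_pattern ns K J"
  shows "activation_region ns K J \<theta> = {x. \<forall>l<length ns. \<forall>i<ns!l. argG \<theta> ns K J l x i = J l i}"
proof -
  have eqv: "argmax_set \<theta> ns K l x i = argG \<theta> ns K J l x i"
    if "l < length ns" "\<forall>l'<l. \<forall>i<ns!l'. argmax_set \<theta> ns K l' x i = J l' i" for l x i
    using feat_GG[OF ap that] by (simp add: argmax_set_def argG_def)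
  show ?thesis
  proof (intro set_eqI iffI; simp add: activation_region_def)
    fix x assume a: "\<forall>l<length ns. \<forall>i<ns!l. argmax_set \<theta> ns K l x i = J l i"
    show "\<forall>l<length ns. \<forall>i<ns!l. argG \<theta> ns K J l x i = J l i"
    proof (intro allI impI)
      fix l i assume "l < length ns" "i < ns!l"
      then show "argG \<theta> ns K J l x i = J l i" using a eqv[of l x i] by auto
    qed
  next
    fix x assume a: "\<forall>l<length ns. \<forall>i<ns!l. argG \<theta> ns K J l x i = J l i"
    have "l < length ns \<longrightarrow> (\<forall>i<ns!l. argmax_set \<theta> ns K l x i = J l i)" for l
    proof (induct l rule: less_induct)
      case (less l)
      show ?case
      proof (intro impI allI)
        fix i assume l: "l < length ns" and i: "i < ns!l"
        have "\<forall>l'<l. \<forall>i<ns!l'. argmax_set \<theta> ns K l' x i = J l' i" using less l by auto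
        then show "argmax_set \<theta> ns K l x i = J l i" using eqv[OF l] a l i by auto
      qed
    qed
    then show "\<forall>l<length ns. \<forall>i<ns!l. argmax_set \<theta> ns K l x i = J l i" by blast
  qed
qed

lemma argG_iff:
  assumes ap: "activation_pattern ns K J" and l: "l < length ns" and i: "i < ns!l"
  shows "argG \<theta> ns K J l x i = J l i \<longleftrightarrow>
     (\<forall>k\<in>J l i - {sel J l i}. GG \<theta> ns J l x i k - GG \<theta> ns J l x i (sel J l i) = 0) \<and>
     (\<forall>k\<in>{..<K} - J l i. GG \<theta> ns J l x i k - GG \<theta> ns J l x i (sel J l i) < 0)"
proof -
  let ?s = "sel J l i"
  let ?G = "GG \<theta> ns J l x i"
  have s: "?s \<in> J l i" "?s < K" using sel_in[OF ap l i] by auto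
  have JK: "J l i \<subseteq> {..<K}" using ap l i by (auto simp: activation_pattern_def)
  show ?thesis
  proof
    assume A: "argG \<theta> ns K J l x i = J l i"
    have mx: "k \<in> J l i \<Longrightarrow> k' < K \<Longrightarrow> ?G k' \<le> ?G k" for k k'
      using A by (auto simp: argG_def)
    show "(\<forall>k\<in>J l i - {?s}. ?G k - ?G ?s = 0) \<and> (\<forall>k\<in>{..<K} - J l i. ?G k - ?G ?s < 0)"
    proof (intro conjI ballI)
      fix k assume k: "k \<in> J l i - {?s}"
      then have "?G k \<le> ?G ?s" "?G ?s \<le> ?G k" using mx s JK by auto
      then show "?G k - ?G ?s = 0" by simp
    next
      fix k assume k: "k \<in> {..<K} - J l i"
      then have "k \<notin> argG \<theta> ns K J l x i" using A by simp
      then obtain k' where k': "k' < K" "?G k < ?G k'" using k by (auto simp: argG_def not_le)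
      moreover have "?G k' \<le> ?G ?s" using mx[OF s(1) k'(1)] .
      ultimately show "?G k - ?G ?s < 0" by simp
    qed
  next
    assume B: "(\<forall>k\<in>J l i - {?s}. ?G k - ?G ?s = 0) \<and> (\<forall>k\<in>{..<K} - J l i. ?G k - ?G ?s < 0)"
    have le: "?G k' \<le> ?G ?s" if "k' < K" for k'
    proof -
      consider "k' = ?s" | "k' \<in> J l i - {?s}" | "k' \<in> {..<K} - J l i" using \<open>k' < K\<close> by blast
      then show ?thesis
      proof cases
        case 1 then show ?thesis by simp
      next
        case 2 then have "?G k' - ?G ?s = 0" using B by blast
        then show ?thesis by simp
      next
        case 3 then have "?G k' - ?G ?s < 0" using B by blast
        then show ?thesis by simp
      qed
    qed
    show "argG \<theta> ns K J l x i = J l i"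
    proof (intro set_eqI iffI)
      fix k assume "k \<in> argG \<theta> ns K J l x i"
      then have k: "k < K" "\<forall>k'<K. ?G k' \<le> ?G k" by (auto simp: argG_def)
      show "k \<in> J l i"
      proof (rule ccontr)
        assume "k \<notin> J l i"
        then have "?G k < ?G ?s" using B k by auto
        then show False using k s by force
      qed
    next
      fix k assume k: "k \<in> J l i"
      have "?G k = ?G ?s" using B k by (cases "k = ?s") auto
      then show "k \<in> argG \<theta> ns K J l x i" using k JK le by (auto simp: argG_def)
    qed
  qed
qed



definition Vf :: "('n::finite param \<Rightarrow> real) \<Rightarrow> nat list \<Rightarrow> (nat \<Rightarrow> nat \<Rightarrow> nat set) \<Rightarrow> (nat \<times> nat) \<times> nat \<Rightarrow> real^'n" where
  "Vf \<theta> ns J q = ga \<theta> ns J (fst (fst q)) (snd (fst q)) (snd q) - ga \<theta> ns J (fst (fst q)) (snd (fst q)) (sel J (fst (fst q)) (snd (fst q)))"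

definition Df :: "('n::finite param \<Rightarrow> real) \<Rightarrow> nat list \<Rightarrow> (nat \<Rightarrow> nat \<Rightarrow> nat set) \<Rightarrow> (nat \<times> nat) \<times> nat \<Rightarrow> real" where
  "Df \<theta> ns J q = gc \<theta> ns J (fst (fst q)) (snd (fst q)) (snd q) - gc \<theta> ns J (fst (fst q)) (snd (fst q)) (sel J (fst (fst q)) (snd (fst q)))"

definition UU :: "nat list \<Rightarrow> (nat \<times> nat) set" where
  "UU ns = (SIGMA l:{..<length ns}. {..<ns!l})"

definition QQ :: "nat list \<Rightarrow> (nat \<Rightarrow> nat \<Rightarrow> nat set) \<Rightarrow> ((nat \<times> nat) \<times> nat) set" where
  "QQ ns J = (SIGMA li:UU ns. J (fst li) (snd li) - {sel J (fst li) (snd li)})"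

definition QQ2 :: "nat list \<Rightarrow> nat \<Rightarrow> (nat \<Rightarrow> nat \<Rightarrow> nat set) \<Rightarrow> ((nat \<times> nat) \<times> nat) set" where
  "QQ2 ns K J = (SIGMA li:UU ns. {..<K} - J (fst li) (snd li))"

lemma GG_diff: "GG \<theta> ns J l x i k - GG \<theta> ns J l x i (sel J l i) = Vf \<theta> ns J ((l,i),k) \<bullet> x + Df \<theta> ns J ((l,i),k)"
  by (simp add: GG_def Vf_def Df_def inner_diff_left)

lemma region_VD:
  assumes ap: "activation_pattern ns K J"
  shows "activation_region ns K J \<theta> =
    {x. (\<forall>q\<in>QQ ns J. Vf \<theta> ns J q \<bullet> x + Df \<theta> ns J q = 0) \<and> (\<forall>q\<in>QQ2 ns K J. Vf \<theta> ns J q \<bullet> x + Df \<theta> ns J q < 0)}"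
proof -
  have eqx: "(\<forall>l<length ns. \<forall>i<ns!l. argG \<theta> ns K J l x i = J l i) \<longleftrightarrow>
     (\<forall>q\<in>QQ ns J. Vf \<theta> ns J q \<bullet> x + Df \<theta> ns J q = 0) \<and> (\<forall>q\<in>QQ2 ns K J. Vf \<theta> ns J q \<bullet> x + Df \<theta> ns J q < 0)" for x
  proof -
    have "(\<forall>l<length ns. \<forall>i<ns!l. argG \<theta> ns K J l x i = J l i) \<longleftrightarrow>
      (\<forall>l<length ns. \<forall>i<ns!l. (\<forall>k\<in>J l i - {sel J l i}. Vf \<theta> ns J ((l,i),k) \<bullet> x + Df \<theta> ns J ((l,i),k) = 0) \<and>
         (\<forall>k\<in>{..<K} - J l i. Vf \<theta> ns J ((l,i),k) \<bullet> x + Df \<theta> ns J ((l,i),k) < 0))"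
    proof -
      have h: "(argG \<theta> ns K J l x i = J l i) \<longleftrightarrow>
        ((\<forall>k\<in>J l i - {sel J l i}. Vf \<theta> ns J ((l,i),k) \<bullet> x + Df \<theta> ns J ((l,i),k) = 0) \<and>
         (\<forall>k\<in>{..<K} - J l i. Vf \<theta> ns J ((l,i),k) \<bullet> x + Df \<theta> ns J ((l,i),k) < 0))"
        if "l < length ns" "i < ns!l" for l i
        using argG_iff[OF ap that, of \<theta> x] unfolding GG_diff .
      show ?thesis by (intro all_cong1 imp_cong refl, rule h, assumption+)
    qed
    also have "\<dots> \<longleftrightarrow> (\<forall>q\<in>QQ ns J. Vf \<theta> ns J q \<bullet> x + Df \<theta> ns J q = 0) \<and> (\<forall>q\<in>QQ2 ns K J. Vf \<theta> ns J q \<bullet> x + Df \<theta> ns J q < 0)"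
      unfolding QQ_def QQ2_def UU_def by fastforce
    finally show ?thesis .
  qed
  show ?thesis unfolding region_argG[OF ap] by (rule Collect_cong) (rule eqx)
qed

lemma finite_QQ: "finite (QQ ns J)" if "activation_pattern ns K J"
proof -
  have "QQ ns J \<subseteq> UU ns \<times> {..<K}"
  proof
    fix q assume "q \<in> QQ ns J"
    then obtain l i k where q: "q = ((l,i),k)" "l < length ns" "i < ns!l" "k \<in> J l i"
      by (auto simp: QQ_def UU_def)
    then have "k < K" using that by (auto simp: activation_pattern_def)
    then show "q \<in> UU ns \<times> {..<K}" using q by (auto simp: UU_def)
  qed
  moreover have "finite (UU ns)" by (simp add: UU_def)
  ultimately show ?thesis using finite_subset by blast
qed

lemma finite_QQ2: "finite (QQ2 ns K J)"
proof -
  have "QQ2 ns K J \<subseteq> UU ns \<times> {..<K}" by (auto simp: QQ2_def UU_def)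
  moreover have "finite (UU ns)" by (simp add: UU_def)
  ultimately show ?thesis using finite_subset by blast
qed

lemma card_QQ:
  assumes ap: "activation_pattern ns K J"
  shows "card (QQ ns J) = partial_degree ns J"
proof -
  have JK: "J l i \<subseteq> {..<K}" "finite (J l i)" "sel J l i \<in> J l i" if "(l,i) \<in> UU ns" for l i
    using that ap sel_in[OF ap] finite_subset[of "J l i" "{..<K}"] by (auto simp: UU_def activation_pattern_def)
  have "card (QQ ns J) = (\<Sum>li\<in>UU ns. card (J (fst li) (snd li) - {sel J (fst li) (snd li)}))"
    unfolding QQ_def using JK by (intro card_SigmaI) (auto simp: UU_def)
  also have "\<dots> = (\<Sum>li\<in>UU ns. card (J (fst li) (snd li)) - 1)"
    by (rule sum.cong) (use JK in \<open>auto simp: card_Diff_singleton\<close>)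
  also have "\<dots> = partial_degree ns J"
  proof -
    have "{(l,i). l < length ns \<and> i < ns!l} = UU ns" by (auto simp: UU_def)
    then show ?thesis unfolding partial_degree_def by (simp add: case_prod_beta')
  qed
  finally show ?thesis .
qed



lemma ga_upd: "ga (\<theta>(Bp a b c := y)) ns J l i k = ga \<theta> ns J l i k"
  by (induct l arbitrary: i k) auto

lemma gc_upd:
  assumes "k0 \<noteq> sel J l0 i0"
  shows "gc (\<theta>(Bp l0 i0 k0 := y)) ns J l i k = gc \<theta> ns J l i k + (if (l,i,k) = (l0,i0,k0) then y - \<theta> (Bp l0 i0 k0) else 0)"
proof (induct l arbitrary: i k)
  case 0 then show ?case by auto
next
  case (Suc l)
  have ne: "(l, j, sel J l j) \<noteq> (l0,i0,k0)" for j using assms by auto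
  have e: "gc (\<theta>(Bp l0 i0 k0 := y)) ns J l j (sel J l j) = gc \<theta> ns J l j (sel J l j)" for j
    using Suc[of j "sel J l j"] by (simp only: if_not_P[OF ne] add_0_right)
  have S: "(\<Sum>j<ns!l. (\<theta>(Bp l0 i0 k0 := y)) (W (Suc l) i k j) * gc (\<theta>(Bp l0 i0 k0 := y)) ns J l j (sel J l j))
      = (\<Sum>j<ns!l. \<theta> (W (Suc l) i k j) * gc \<theta> ns J l j (sel J l j))"
    by (intro sum.cong refl) (simp add: e)
  have "gc (\<theta>(Bp l0 i0 k0 := y)) ns J (Suc l) i k = (\<Sum>j<ns!l. (\<theta>(Bp l0 i0 k0 := y)) (W (Suc l) i k j) * gc (\<theta>(Bp l0 i0 k0 := y)) ns J l j (sel J l j)) + (\<theta>(Bp l0 i0 k0 := y)) (Bp (Suc l) i k)"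
    by (rule gc.simps(2))
  also note S
  also have "(\<theta>(Bp l0 i0 k0 := y)) (Bp (Suc l) i k) = \<theta> (Bp (Suc l) i k) + (if (Suc l,i,k) = (l0,i0,k0) then y - \<theta> (Bp l0 i0 k0) else 0)"
    by auto
  finally show ?case by (simp only: gc.simps add.assoc)
qed

lemma Vf_upd: "Vf (\<theta>(Bp a b c := y)) ns J q = Vf \<theta> ns J q"
  by (simp add: Vf_def ga_upd)

lemma Df_upd:
  assumes "k0 \<noteq> sel J l0 i0"
  shows "Df (\<theta>(Bp l0 i0 k0 := y)) ns J q = Df \<theta> ns J q + (if q = ((l0,i0),k0) then y - \<theta> (Bp l0 i0 k0) else 0)"
proof -
  obtain l i k where q: "q = ((l,i),k)" by (metis prod.exhaust)
  have "(l, i, sel J l i) \<noteq> (l0,i0,k0)" using assms by auto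
  then show ?thesis using q by (auto simp: Df_def gc_upd[OF assms])
qed

lemma coord_meas: "(\<lambda>\<theta>. \<theta> p) \<in> borel_measurable (PiM I (\<lambda>_. lborel :: real measure))"
proof (cases "p \<in> I")
  case True
  have "(\<lambda>\<theta>. \<theta> p) \<in> measurable (PiM I (\<lambda>_. lborel :: real measure)) lborel"
    by (rule measurable_component_singleton[OF True])
  then show ?thesis by simp
next
  case False
  have u: "\<theta> p = undefined" if "\<theta> \<in> space (PiM I (\<lambda>_. lborel :: real measure))" for \<theta>
  proof -
    have "\<theta> \<in> PiE I (\<lambda>_. space (lborel :: real measure))" using that by (simp only: space_PiM)
    then show ?thesis using False by (rule PiE_arb)
  qed
  have "(\<lambda>\<theta>. \<theta> p) \<in> borel_measurable (PiM I (\<lambda>_. lborel :: real measure)) \<longleftrightarrow>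
        (\<lambda>_. undefined :: real) \<in> borel_measurable (PiM I (\<lambda>_. lborel :: real measure))"
    by (rule Sigma_Algebra.measurable_cong) (rule u)
  then show ?thesis by simp
qed

lemma ga_meas: "(\<lambda>\<theta>. ga \<theta> ns J l i k) \<in> borel_measurable (PiM I (\<lambda>_. lborel :: real measure))"
proof (induct l arbitrary: i k)
  case 0
  show ?case
  proof (subst borel_measurable_euclidean_space, intro ballI)
    fix b :: "real^'a" assume "b \<in> Basis"
    then obtain j u where b: "b = axis j u" "u \<in> (Basis :: real set)" unfolding Basis_vec_def by blast
    then have u: "u = 1" by simp
    have "(\<lambda>\<theta>. ga \<theta> ns J 0 i k \<bullet> b) = (\<lambda>\<theta>. \<theta> (W0 i k j))"
      by (rule ext) (simp only: b u ga.simps inner_axis vec_lambda_beta inner_real_def mult_1_right)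
    then show "(\<lambda>\<theta>. ga \<theta> ns J 0 i k \<bullet> b) \<in> borel_measurable (PiM I (\<lambda>_. lborel :: real measure))"
      using coord_meas by simp
  qed
next
  case (Suc l)
  show ?case unfolding ga.simps
    by (intro borel_measurable_sum borel_measurable_scaleR coord_meas Suc)
qed

lemma gc_meas: "(\<lambda>\<theta>. gc \<theta> ns J l i k) \<in> borel_measurable (PiM I (\<lambda>_. lborel :: real measure))"
proof (induct l arbitrary: i k)
  case 0 show ?case unfolding gc.simps by (rule coord_meas)
next
  case (Suc l)
  show ?case unfolding gc.simps
    by (intro borel_measurable_add borel_measurable_sum borel_measurable_times coord_meas Suc)
qed

lemma Vf_meas: "(\<lambda>\<theta>. Vf \<theta> ns J q) \<in> borel_measurable (PiM I (\<lambda>_. lborel :: real measure))"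
  unfolding Vf_def by (intro borel_measurable_diff ga_meas)

lemma Df_meas: "(\<lambda>\<theta>. Df \<theta> ns J q) \<in> borel_measurable (PiM I (\<lambda>_. lborel :: real measure))"
  unfolding Df_def by (intro borel_measurable_diff gc_meas)

lemma finite_param_set: "finite (param_set ns K :: 'n::finite param set)"
proof -
  define Mx where "Mx = Suc (sum_list ns + length ns)"
  have le: "ns!l < Mx" if "l < length ns" for l
    using that member_le_sum_list[of "ns!l" ns] by (auto simp: Mx_def)
  let ?A = "(\<lambda>(i,k,j). W0 i k j) ` ({..<Mx} \<times> {..<K} \<times> (UNIV :: 'n set))"
  let ?B = "(\<lambda>(l,i,k,j). W l i k j :: 'n param) ` ({..<Mx} \<times> {..<Mx} \<times> {..<K} \<times> {..<Mx})"
  let ?C = "(\<lambda>(l,i,k). Bp l i k :: 'n param) ` ({..<Mx} \<times> {..<Mx} \<times> {..<K})"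
  have sub: "param_set ns K \<subseteq> ?A \<union> ?B \<union> ?C"
  proof
    fix p :: "'n param" assume "p \<in> param_set ns K"
    then consider (a) i k j where "p = W0 i k j" "0 < length ns" "i < ns!0" "k < K"
      | (b) l i k j where "p = W l i k j" "0 < l" "l < length ns" "i < ns!l" "k < K" "j < ns!(l-1)"
      | (c) l i k where "p = Bp l i k" "l < length ns" "i < ns!l" "k < K"
      unfolding param_set_def by blast
    then show "p \<in> ?A \<union> ?B \<union> ?C"
    proof cases
      case a
      then have "i < Mx" using le[of 0] by auto
      then have "p \<in> ?A" using a by (intro rev_image_eqI[of "(i,k,j)"]) auto
      then show ?thesis by blast
    next
      case b
      have "l - 1 < length ns" using b by simp
      then have "i < Mx" "j < Mx" "l < Mx" using b le[of l] le[of "l-1"] by (auto simp: Mx_def)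
      then have "p \<in> ?B" using b by (intro rev_image_eqI[of "(l,i,k,j)"]) auto
      then show ?thesis by blast
    next
      case c
      then have "i < Mx" "l < Mx" using le[of l] by (auto simp: Mx_def)
      then have "p \<in> ?C" using c by (intro rev_image_eqI[of "(l,i,k)"]) auto
      then show ?thesis by blast
    qed
  qed
  have fA: "finite ?A" by (rule finite_imageI) (intro finite_cartesian_product finite_lessThan; simp)
  have fB: "finite ?B" by (rule finite_imageI) (intro finite_cartesian_product finite_lessThan; simp)
  have fC: "finite ?C" by (rule finite_imageI) (intro finite_cartesian_product finite_lessThan; simp)
  have "finite (?A \<union> ?B \<union> ?C)" using fA fB fC by blast
  then show ?thesis by (rule finite_subset[OF sub])
qed



lemma distinct_nth_notin_drop:
  assumes "distinct qs" "j < length qs"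
  shows "qs ! j \<notin> set (drop (Suc j) qs)"
proof
  assume "qs ! j \<in> set (drop (Suc j) qs)"
  then obtain k where k: "k < length (drop (Suc j) qs)" "drop (Suc j) qs ! k = qs ! j"
    by (auto simp: in_set_conv_nth)
  then have "qs ! (Suc j + k) = qs ! j" "Suc j + k < length qs" using assms by auto
  then show False using assms nth_eq_iff_index_eq[of qs "Suc j + k" j] by auto
qed

theorem lemma1:
  fixes ns :: "nat list" and K :: nat and r :: nat
    and J :: "nat \<Rightarrow> nat \<Rightarrow> nat set"
  assumes "1 \<le> K"
    and "r \<le> CARD('n::finite)"
    and "activation_pattern ns K J"
    and "partial_degree ns J = r"
  shows "(\<forall>\<theta> :: 'n param \<Rightarrow> real.
            convex (activation_region ns K J \<theta>)
          \<and> rel_interior (activation_region ns K J \<theta>) = activation_region ns K J \<theta>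
          \<and> (\<exists>P. polyhedron P \<and> activation_region ns K J \<theta> = rel_interior P))
       \<and> (AE \<theta> :: 'n param \<Rightarrow> real in PiM (param_set ns K) (\<lambda>_. lborel).
            activation_region ns K J \<theta> = {}
          \<or> aff_dim (activation_region ns K J \<theta>) = int CARD('n) - int r)"
proof -
  note ap = assms(3)
  define Q where "Q = QQ ns J"
  define Q2 where "Q2 = QQ2 ns K J"
  have fQ: "finite Q" using finite_QQ[OF ap] by (simp add: Q_def)
  have fQ2: "finite Q2" using finite_QQ2 by (simp add: Q2_def)
  have reg: "activation_region ns K J \<theta> = {x. (\<forall>q\<in>Q. Vf \<theta> ns J q \<bullet> x + Df \<theta> ns J q = 0) \<and> (\<forall>q\<in>Q2. Vf \<theta> ns J q \<bullet> x + Df \<theta> ns J q < 0)}"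
    for \<theta> :: "'n param \<Rightarrow> real"
    unfolding Q_def Q2_def by (rule region_VD[OF ap])
  have part1: "\<forall>\<theta> :: 'n param \<Rightarrow> real.
            convex (activation_region ns K J \<theta>)
          \<and> rel_interior (activation_region ns K J \<theta>) = activation_region ns K J \<theta>
          \<and> (\<exists>P. polyhedron P \<and> activation_region ns K J \<theta> = rel_interior P)"
    using region_generic[OF fQ fQ2 reg] by blast
  have cardQ: "card Q = r" using card_QQ[OF ap] assms(4) by (simp add: Q_def)
  obtain qs where qs: "set qs = Q" "distinct qs" using finite_distinct_list[OF fQ] by blast
  have lqs: "length qs = r" using distinct_card[OF qs(2)] qs(1) cardQ by simp
  define M where "M = PiM (param_set ns K :: 'n param set) (\<lambda>_. lborel :: real measure)"
  define PS where "PS \<theta> = map (\<lambda>q. (Vf \<theta> ns J q, Df \<theta> ns J q)) qs" for \<theta> :: "'n param \<Rightarrow> real"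
  define N where "N j = {\<theta> \<in> space M. fst (gsr (PS \<theta>) ! j) = 0 \<and> snd (gsr (PS \<theta>) ! j) = 0}" for j
  have finI: "finite (param_set ns K :: 'n param set)" by (rule finite_param_set)
  have lPS[simp]: "length (PS \<theta>) = r" for \<theta> by (simp add: PS_def lqs)
  have Nsets: "N j \<in> sets M" if j: "j < r" for j
  proof -
    have m: "\<forall>j<length qs. (\<lambda>\<theta>. fst (gsr (map (\<lambda>q. (Vf \<theta> ns J q, Df \<theta> ns J q)) qs) ! j)) \<in> borel_measurable M
                     \<and> (\<lambda>\<theta>. snd (gsr (map (\<lambda>q. (Vf \<theta> ns J q, Df \<theta> ns J q)) qs) ! j)) \<in> borel_measurable M"
      unfolding M_def by (rule gsr_measurable) (simp_all add: Vf_meas Df_meas)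
    have f: "(\<lambda>\<theta>. fst (gsr (PS \<theta>) ! j)) \<in> borel_measurable M" and g: "(\<lambda>\<theta>. snd (gsr (PS \<theta>) ! j)) \<in> borel_measurable M"
      using m j lqs by (auto simp: PS_def)
    have "(\<lambda>\<theta>. fst (gsr (PS \<theta>) ! j)) -` {0} \<inter> space M \<in> sets M"
      by (rule measurable_sets[OF f]) simp
    moreover have "(\<lambda>\<theta>. snd (gsr (PS \<theta>) ! j)) -` {0} \<inter> space M \<in> sets M"
      by (rule measurable_sets[OF g]) simp
    ultimately have "((\<lambda>\<theta>. fst (gsr (PS \<theta>) ! j)) -` {0} \<inter> space M) \<inter> ((\<lambda>\<theta>. snd (gsr (PS \<theta>) ! j)) -` {0} \<inter> space M) \<in> sets M"
      by (rule sets.Int)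
    moreover have "((\<lambda>\<theta>. fst (gsr (PS \<theta>) ! j)) -` {0} \<inter> space M) \<inter> ((\<lambda>\<theta>. snd (gsr (PS \<theta>) ! j)) -` {0} \<inter> space M) = N j"
      by (auto simp: N_def)
    ultimately show ?thesis by simp
  qed
  have Nnull: "N j \<in> null_sets M" if j: "j < r" for j
  proof -
    obtain l0 i0 k0 where qj: "qs ! j = ((l0,i0),k0)" by (metis prod.exhaust)
    have "qs ! j \<in> Q" using qs(1) j lqs nth_mem by metis
    then have l0: "l0 < length ns" "i0 < ns!l0" "k0 \<in> J l0 i0" "k0 \<noteq> sel J l0 i0"
      by (auto simp: qj Q_def QQ_def UU_def)
    have k0K: "k0 < K" using ap l0 by (auto simp: activation_pattern_def)
    define p where "p = (Bp l0 i0 k0 :: 'n param)"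
    have pI: "p \<in> param_set ns K" using l0 k0K by (auto simp: param_set_def p_def)
    have sec: "\<exists>y0. \<forall>y. x(p := y) \<in> N j \<longrightarrow> y = y0" for x :: "'n param \<Rightarrow> real"
    proof -
      define acc where "acc = gsr (drop (Suc j) (PS x))"
      define v where "v = Vf x ns J (qs ! j)"
      define S where "S = (\<Sum>k<length acc. coef (fst (acc!k)) v * snd (acc!k))"
      show ?thesis
      proof (intro exI allI impI)
        fix y assume yN: "x(p := y) \<in> N j"
        have dropeq: "drop (Suc j) (PS (x(p := y))) = drop (Suc j) (PS x)"
        proof -
          have "map (\<lambda>q. (Vf (x(p := y)) ns J q, Df (x(p := y)) ns J q)) (drop (Suc j) qs)
              = map (\<lambda>q. (Vf x ns J q, Df x ns J q)) (drop (Suc j) qs)"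
          proof (rule map_cong[OF refl])
            fix q assume "q \<in> set (drop (Suc j) qs)"
            then have qne: "q \<noteq> ((l0,i0),k0)" using distinct_nth_notin_drop[OF qs(2), of j] j lqs qj by auto
            show "(Vf (x(p := y)) ns J q, Df (x(p := y)) ns J q) = (Vf x ns J q, Df x ns J q)"
              unfolding p_def by (simp only: Vf_upd Df_upd[OF l0(4)] if_not_P[OF qne] add_0_right)
          qed
          then show ?thesis by (simp add: PS_def drop_map)
        qed
        have nth: "PS (x(p := y)) ! j = (v, Df x ns J (qs ! j) + (y - x p))"
          using j lqs unfolding PS_def v_def p_def by (simp add: Vf_upd Df_upd[OF l0(4)] qj)
        have "gsr (PS (x(p := y))) ! j = gstep acc (v, Df x ns J (qs ! j) + (y - x p))"
          using gsr_nth[of j "PS (x(p := y))"] j dropeq nth by (simp add: acc_def)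
        then have "snd (gsr (PS (x(p := y))) ! j) = Df x ns J (qs ! j) + (y - x p) - S"
          by (simp add: gstep_def S_def)
        moreover have "snd (gsr (PS (x(p := y))) ! j) = 0" using yN by (simp add: N_def)
        ultimately show "y = x p + S - Df x ns J (qs ! j)" by simp
      qed
    qed
    show ?thesis unfolding M_def
      by (rule null_section[OF finI pI]) (use Nsets[OF j] sec in \<open>simp_all add: M_def\<close>)
  qed
  have AE1: "AE \<theta> in M. \<forall>j\<in>{..<r}. \<theta> \<notin> N j"
    by (rule eventually_ball_finite) (auto intro: AE_not_in Nnull)
  have AE2: "AE \<theta> in M. \<theta> \<in> space M \<and> (\<forall>j\<in>{..<r}. \<theta> \<notin> N j)"
    using AE1 AE_space by (simp add: AE_conj_iff)
  have part2: "AE \<theta> in M. activation_region ns K J \<theta> = {}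
          \<or> aff_dim (activation_region ns K J \<theta>) = int CARD('n) - int r"
  proof (rule eventually_mono[OF AE2], clarify)
    fix \<theta> :: "'n param \<Rightarrow> real"
    assume th: "\<theta> \<in> space M" "\<forall>j\<in>{..<r}. \<theta> \<notin> N j"
      and ne: "aff_dim (activation_region ns K J \<theta>) \<noteq> int CARD('n) - int r"
    show "activation_region ns K J \<theta> = {}"
    proof (rule ccontr)
      assume ne2: "activation_region ns K J \<theta> \<noteq> {}"
      then obtain x0 where x0: "x0 \<in> activation_region ns K J \<theta>" by blast
      have cons: "\<forall>pp\<in>set (PS \<theta>). fst pp \<bullet> x0 + snd pp = 0"
        using x0 qs(1) unfolding reg PS_def by auto
      have nz: "\<forall>j<length (PS \<theta>). fst (gsr (PS \<theta>) ! j) \<noteq> 0"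
      proof (intro allI impI)
        fix j assume j: "j < length (PS \<theta>)"
        have "fst (gsr (PS \<theta>) ! j) \<bullet> x0 + snd (gsr (PS \<theta>) ! j) = 0"
          using gsr_consistent[OF cons] j by blast
        moreover have "\<theta> \<notin> N j" using th j by simp
        ultimately show "fst (gsr (PS \<theta>) ! j) \<noteq> 0" using th(1) by (auto simp: N_def)
      qed
      have fsteq: "fst ` set (PS \<theta>) = Vf \<theta> ns J ` Q" unfolding PS_def using qs(1) by force
      have "r \<le> dim (Vf \<theta> ns J ` Q)" using gsr_dim[OF nz] fsteq by simp
      moreover have "dim (Vf \<theta> ns J ` Q) \<le> card (Vf \<theta> ns J ` Q)"
        by (rule dim_le_card) (auto intro: span_base fQ)
      moreover have "card (Vf \<theta> ns J ` Q) \<le> r" using card_image_le[OF fQ] cardQ by metis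
      ultimately have dimr: "dim (Vf \<theta> ns J ` Q) = r" by linarith
      have "aff_dim (activation_region ns K J \<theta>) = int DIM(real^'n) - int (dim (Vf \<theta> ns J ` Q))"
        by (rule affdim_generic[OF fQ2 reg ne2])
      then show False using ne dimr by simp
    qed
  qed
  show ?thesis using part1 part2 unfolding M_def by blast
qed


end
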